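(* Let $i\in\mathbb N$, let $\mathcal T$ be a tree with root $\emptyset$, let $v\succ\emptyset$ in $\mathcal T$ and let $(u_l)_{l=0}^r$ be the branch from $\emptyset$ to $v$. (1) Let $\gamma\in\Gamma$ with tree analysis $(I_t,\varepsilon_t,\eta_t)_{t\in\mathcal T}$, and let $y\in\mathscr B_{mT}$ be a normalised finitely supported vector such that (a) $v$ is the covering index for $y$, (b) $|d^*_\xi(y)|<4^{-i-3}$ for all $\xi\in\Gamma$, and (c) $|e^*_\gamma(y)|>4^{-i-1}$. Then $r\le i+1$. (2) Let $f\in W$ with tree analysis $(f_t)_{t\in\mathcal T}$, let $z=e_l\in T$ for some $l\in\mathbb N$, and assume (a) $f_v=e^*_l$ and (b) $f(z)>4^{-i-1}$. Then $r\le i$.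
   Context: Fix sequences $(m_j)$, $(n_j)$ of natural numbers with $m_1=n_1=4$, $m_{j+1}\ge m_j^2$, $n_{j+1}\ge m_{j+1}^2(4n_j)^{\log_2 m_{j+1}}$. Mixed Tsirelson space $T$: $W\subset c_{00}$ is the smallest set containing $\pm e^*_k$ ($k\in\mathbb N$) such that if $j\in\mathbb N$, $d\le n_j$ and $f_1<\dots<f_d\in W$ then $m_j^{-1}\sum f_i\in W$; $T$ is the completion of $c_{00}$ under $\sup_{f\in W}f(x)$, with unit vector basis $(e_n)$. A tree analysis of $f\in W$ is a family $(f_t)_{t\in\mathcal T}$ indexed by a finite tree with root $\emptyset$ such that $f_\emptyset=f$, $f_t=\pm e^*_k$ for terminal $t$, and for non-terminal $t$, $f_t=m_j^{-1}\sum_{s\in S_t}f_s$ for some $j$ with $(f_s)_{s\in S_t}$ a block sequence in $W$ of length at most $n_j$ ($S_t$ = immediate successors of $t$). The space $\mathscr B_{mT}$: $\Delta_1=\{1\}$; given $\Delta_1,\dots,\Delta_q$, with $\Gamma_0=\emptyset$, $\Gamma_p=\bigcup_{r\le p}\Delta_r$, $\Delta_{q+1}$ consists of the tuples $(q+1,0,m_j,\varepsilon e^*_\eta)$ with $j\le q+1$, $\varepsilon=\pm1$, $\eta\in\Gamma_q$, and the tuples $(q+1,\xi,m_j,\varepsilon e^*_\eta)$ with $1\le p<q$, $j\le p$, $\xi\in\Delta_p$, $w(\xi)=m_j^{-1}$, $\mathrm{age}(\xi)<n_j$, $\varepsilon=\pm1$, $\eta\in\Gamma_q\setminus\Gamma_p$;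 weight $w=m_j^{-1}$, rank $q+1$, age $1$ resp. $\mathrm{age}(\xi)+1$. $\Gamma=\bigcup\Delta_q$. In $\ell_1(\Gamma)$, $d^*_\gamma=e^*_\gamma-c^*_\gamma$ with $c^*_\gamma=m_j^{-1}\varepsilon P^*_{(0,q]}e^*_\eta$ for $\gamma=(q+1,0,m_j,\varepsilon e^*_\eta)$ and $c^*_\gamma=e^*_\xi+m_j^{-1}\varepsilon P^*_{(p,q]}e^*_\eta$ for $\gamma=(q+1,\xi,m_j,\varepsilon e^*_\eta)$, $\xi\in\Delta_p$ ($P^*_{(p,q]}$ the basis projection onto $\mathrm{span}\{d^*_\delta:\mathrm{rank}\,\delta\in(p,q]\}$). $(d^*_\gamma)$ is a basis of $\ell_1(\Gamma)$, $(d_\gamma)\subset\ell_\infty(\Gamma)$ is biorthogonal, $\mathscr B_{mT}=\overline{\mathrm{span}}\{d_\gamma\}$, and $e^*_\gamma(x)=x(\gamma)$. For an interval $I$, $P_I$ is the projection of $\mathscr B_{mT}$ onto $\overline{\mathrm{span}}\{d_\delta:\mathrm{rank}\,\delta\in I\}$ along the other $d_\delta$, and $e^*_\eta P_I=P^*_Ie^*_\eta$. $\mathrm{rng}$ of a finitely supported vector (resp. of a functional in $\mathrm{span}\{d^*_\delta\}$) is the smallest interval $[p,q]$ of ranks such that it lies in the span of the $d_\delta$ (resp. $d^*_\delta$) with rank in $[p,q]$. Evaluation analysis: for $\gamma\in\Gamma$ with $w(\gamma)=m_j^{-1}$ there are unique $a\le n_j$ and $(\xi_k,\varepsilon_k,\eta_k)_{k=1}^a$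 with $\xi_a=\gamma$, $\xi_1=(q_1+1,0,m_j,\varepsilon_1e^*_{\eta_1})$, $\xi_k=(q_k+1,\xi_{k-1},m_j,\varepsilon_ke^*_{\eta_k})$ for $k>1$; set $I_1=[1,q_1]$, $I_k=[q_{k-1}+2,q_k]$. Then $e^*_\gamma=\sum_k d^*_{\xi_k}+m_j^{-1}\sum_k\varepsilon_kP^*_{I_k}e^*_{\eta_k}$. For an interval $I$, $e^*_\gamma$ is $I$-decomposable if $A_I=\{k:P^*_{I_k\cap I}e^*_{\eta_k}\neq0\}\neq\emptyset$, and then its $I$-analysis is $(I_k\cap I,\varepsilon_k,\eta_k)_{k\in A_I}$. Tree analysis of $e^*_\gamma$: the family $(I_t,\varepsilon_t,\eta_t)_{t\in\mathcal T}$ over a finite tree of finite sequences with root $\emptyset$, defined by $\eta_\emptyset=\gamma$, $I_\emptyset=(0,\mathrm{rank}\,\gamma)$, $\varepsilon_\emptyset=1$, $S_\emptyset=\{(1),\dots,(a)\}$ with $(I_{(k)},\varepsilon_{(k)},\eta_{(k)})=(I_k,\varepsilon_k,\eta_k)$ from the evaluation analysis; inductively, if $e^*_{\eta_t}$ is $I_t$-decomposable with $I_t$-analysis $(I'_k,\varepsilon'_k,\eta'_k)_{k\in A}$, then $S_t=\{t^\frown k:k\in A\}$ with $(I_{t^\frown k},\varepsilon_{t^\frown k},\eta_{t^\frown k})=(I'_k,\varepsilon'_k,\eta'_k)$; otherwise $t$ is terminal. For a finitely supported $y$, the covering index for $y$ is the maximal $t\in\mathcal T$ with $\mathrm{rng}\,y\cap\mathrm{rng}\,e^*_\gamma\subseteq\mathrm{rng}(e^*_{\eta_t}P_{I_t})$.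 A branch of length $r$ from $u$ to $v$ in a tree is a sequence $(u_l)_{l=0}^r$ with $u_0=u$, $u_{l+1}$ an immediate successor of $u_l$, $u_r=v$. *)

theory Defs
  imports Complex_Main "HOL-Library.Sublist"
begin

definition seq_ok :: "(nat \<Rightarrow> nat) \<Rightarrow> (nat \<Rightarrow> nat) \<Rightarrow> bool" where
  "seq_ok m n \<longleftrightarrow> m 1 = 4 \<and> n 1 = 4 \<and>
     (\<forall>j\<ge>1. m (j+1) \<ge> (m j)^2) \<and>
     (\<forall>j\<ge>1. real (n (j+1)) \<ge> real (m (j+1))^2 * (4 * real (n j)) powr (log 2 (real (m (j+1)))))"

definition supp :: "(nat \<Rightarrow> real) \<Rightarrow> nat set" where
  "supp f = {x. f x \<noteq> 0}"

definition estar :: "nat \<Rightarrow> nat \<Rightarrow> real" where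
  "estar k = (\<lambda>x. if x = k then 1 else 0)"

definition block_less :: "(nat \<Rightarrow> real) \<Rightarrow> (nat \<Rightarrow> real) \<Rightarrow> bool" where
  "block_less f g \<longleftrightarrow> (\<forall>x\<in>supp f. \<forall>y\<in>supp g. x < y)"

inductive_set W :: "(nat \<Rightarrow> nat) \<Rightarrow> (nat \<Rightarrow> nat) \<Rightarrow> (nat \<Rightarrow> real) set"
  for m n where
  W_unit: "\<epsilon> \<in> {1, -1} \<Longrightarrow> (\<lambda>x. \<epsilon> * estar k x) \<in> W m n"
| W_comb: "\<lbrakk> j \<ge> 1; fs \<noteq> []; length fs \<le> n j; \<forall>g\<in>set fs. g \<in> W m n;
            \<forall>i. Suc i < length fs \<longrightarrow> block_less (fs ! i) (fs ! Suc i) \<rbrakk>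
           \<Longrightarrow> (\<lambda>x. (1 / real (m j)) * (\<Sum>g\<leftarrow>fs. g x)) \<in> W m n"

text \<open>Finite trees with root [] are modelled as finite prefix-closed sets of nat lists.\<close>

definition is_tree :: "nat list set \<Rightarrow> bool" where
  "is_tree T \<longleftrightarrow> finite T \<and> [] \<in> T \<and> (\<forall>t k. t @ [k] \<in> T \<longrightarrow> t \<in> T)"

definition succs :: "nat list set \<Rightarrow> nat list \<Rightarrow> nat list set" where
  "succs T t = {s \<in> T. \<exists>k. s = t @ [k]}"

definition W_tree_analysis ::
  "(nat \<Rightarrow> nat) \<Rightarrow> (nat \<Rightarrow> nat) \<Rightarrow> nat list set \<Rightarrow> (nat list \<Rightarrow> nat \<Rightarrow> real) \<Rightarrow> (nat \<Rightarrow> real) \<Rightarrow> bool"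
  where
  "W_tree_analysis m n T ft f \<longleftrightarrow> is_tree T \<and> ft [] = f \<and>
     (\<forall>t\<in>T. succs T t = {} \<longrightarrow> (\<exists>k \<epsilon>. \<epsilon> \<in> {1, -1} \<and> ft t = (\<lambda>x. \<epsilon> * estar k x))) \<and>
     (\<forall>t\<in>T. succs T t \<noteq> {} \<longrightarrow>
        (\<exists>j\<ge>1. card (succs T t) \<le> n j \<and> (\<forall>s\<in>succs T t. ft s \<in> W m n) \<and>
           (\<forall>s\<in>succs T t. \<forall>s'\<in>succs T t. s \<noteq> s' \<longrightarrow>
               block_less (ft s) (ft s') \<or> block_less (ft s') (ft s)) \<and>
           ft t = (\<lambda>x. (1 / real (m j)) * (\<Sum>s\<in>succs T t. ft s x))))"

text \<open>An element (q+1, 0, m_j, eps e*_eta) is G (q+1) None (m_j) eps eta, an element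
  (q+1, xi, m_j, eps e*_eta) is G (q+1) (Some xi) (m_j) eps eta; the unique element of
  Delta_1 is One.\<close>

datatype gam = One | G nat "gam option" nat real gam

fun rank :: "gam \<Rightarrow> nat" where
  "rank One = 1"
| "rank (G r _ _ _ _) = r"

text \<open>weight w(gamma) = 1 / wden gamma (only meaningful for gamma \<noteq> One)\<close>
fun wden :: "gam \<Rightarrow> nat" where
  "wden One = 0"
| "wden (G _ _ M _ _) = M"

fun age :: "gam \<Rightarrow> nat" where
  "age One = 0"
| "age (G _ None _ _ _) = 1"
| "age (G _ (Some \<xi>) _ _ _) = age \<xi> + 1"

inductive_set Gamma :: "(nat \<Rightarrow> nat) \<Rightarrow> (nat \<Rightarrow> nat) \<Rightarrow> gam set" for m n where
  Gamma_One: "One \<in> Gamma m n"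
| Gamma_0: "\<lbrakk> 1 \<le> j; j \<le> q + 1; \<epsilon> \<in> {1, -1}; \<eta> \<in> Gamma m n; rank \<eta> \<le> q \<rbrakk>
            \<Longrightarrow> G (q + 1) None (m j) \<epsilon> \<eta> \<in> Gamma m n"
| Gamma_xi: "\<lbrakk> 1 \<le> p; p < q; 1 \<le> j; j \<le> p; \<xi> \<in> Gamma m n; rank \<xi> = p; \<xi> \<noteq> One;
              wden \<xi> = m j; age \<xi> < n j; \<epsilon> \<in> {1, -1};
              \<eta> \<in> Gamma m n; p < rank \<eta>; rank \<eta> \<le> q \<rbrakk>
            \<Longrightarrow> G (q + 1) (Some \<xi>) (m j) \<epsilon> \<eta> \<in> Gamma m n"

text \<open>dc gamma delta = e*_gamma(d_delta) = d_delta(gamma): the coefficient of d*_delta in the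
  expansion of e*_gamma in the basis (d*_delta), obtained by unfolding
  e*_gamma = d*_gamma + c*_gamma.\<close>

fun dc :: "gam \<Rightarrow> gam \<Rightarrow> real" where
  "dc One = (\<lambda>\<delta>. if \<delta> = One then 1 else 0)"
| "dc (G r None M \<epsilon> \<eta>) = (\<lambda>\<delta>. (if \<delta> = G r None M \<epsilon> \<eta> then 1 else 0)
      + (if 0 < rank \<delta> \<and> rank \<delta> \<le> r - 1 then \<epsilon> / real M * dc \<eta> \<delta> else 0))"
| "dc (G r (Some \<xi>) M \<epsilon> \<eta>) = (\<lambda>\<delta>. (if \<delta> = G r (Some \<xi>) M \<epsilon> \<eta> then 1 else 0) + dc \<xi> \<delta>
      + (if rank \<xi> < rank \<delta> \<and> rank \<delta> \<le> r - 1 then \<epsilon> / real M * dc \<eta> \<delta> else 0))"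

text \<open>A finitely supported y in B_mT is y = sum a_delta d_delta (finite sum); a is its
  coefficient function, so d*_xi(y) = a xi, and y(eta) = e*_eta(y).\<close>

definition yvec :: "(gam \<Rightarrow> real) \<Rightarrow> gam \<Rightarrow> real" where
  "yvec a \<eta> = (\<Sum>\<delta>\<in>{\<delta>. a \<delta> \<noteq> 0}. a \<delta> * dc \<eta> \<delta>)"

definition finsupp_BmT :: "(nat \<Rightarrow> nat) \<Rightarrow> (nat \<Rightarrow> nat) \<Rightarrow> (gam \<Rightarrow> real) \<Rightarrow> bool" where
  "finsupp_BmT m n a \<longleftrightarrow> finite {\<delta>. a \<delta> \<noteq> 0} \<and> {\<delta>. a \<delta> \<noteq> 0} \<subseteq> Gamma m n"

definition normalised :: "(nat \<Rightarrow> nat) \<Rightarrow> (nat \<Rightarrow> nat) \<Rightarrow> (gam \<Rightarrow> real) \<Rightarrow> bool" where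
  "normalised m n a \<longleftrightarrow> bdd_above ((\<lambda>\<eta>. \<bar>yvec a \<eta>\<bar>) ` Gamma m n) \<and>
     (SUP \<eta>\<in>Gamma m n. \<bar>yvec a \<eta>\<bar>) = 1"

definition ivl_hull :: "nat set \<Rightarrow> nat set" where
  "ivl_hull S = (if S = {} then {} else {Min S..Max S})"

definition rng_vec :: "(gam \<Rightarrow> real) \<Rightarrow> nat set" where
  "rng_vec a = ivl_hull (rank ` {\<delta>. a \<delta> \<noteq> 0})"

text \<open>rng of e*_eta P_I = P*_I e*_eta\<close>
definition rng_fun :: "(nat \<Rightarrow> nat) \<Rightarrow> (nat \<Rightarrow> nat) \<Rightarrow> gam \<Rightarrow> nat set \<Rightarrow> nat set" where
  "rng_fun m n \<eta> I = ivl_hull (rank ` {\<delta> \<in> Gamma m n. rank \<delta> \<in> I \<and> dc \<eta> \<delta> \<noteq> 0})"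

definition rng_e :: "(nat \<Rightarrow> nat) \<Rightarrow> (nat \<Rightarrow> nat) \<Rightarrow> gam \<Rightarrow> nat set" where
  "rng_e m n \<eta> = ivl_hull (rank ` {\<delta> \<in> Gamma m n. dc \<eta> \<delta> \<noteq> 0})"

text \<open>P*_J e*_eta \<noteq> 0\<close>
definition Pnz :: "(nat \<Rightarrow> nat) \<Rightarrow> (nat \<Rightarrow> nat) \<Rightarrow> nat set \<Rightarrow> gam \<Rightarrow> bool" where
  "Pnz m n J \<eta> \<longleftrightarrow> (\<exists>\<delta>\<in>Gamma m n. rank \<delta> \<in> J \<and> dc \<eta> \<delta> \<noteq> 0)"

text \<open>Evaluation analysis: the list (I_k, eps_k, eta_k), k = 1..a (list position k-1).\<close>
fun eva :: "gam \<Rightarrow> (nat set \<times> real \<times> gam) list" where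
  "eva One = []"
| "eva (G r None M \<epsilon> \<eta>) = [({1..r - 1}, \<epsilon>, \<eta>)]"
| "eva (G r (Some \<xi>) M \<epsilon> \<eta>) = eva \<xi> @ [({rank \<xi> + 1..r - 1}, \<epsilon>, \<eta>)]"

text \<open>Tree analysis of e*_gamma: the set of (t, I_t, eps_t, eta_t).\<close>
inductive_set TA :: "(nat \<Rightarrow> nat) \<Rightarrow> (nat \<Rightarrow> nat) \<Rightarrow> gam \<Rightarrow> (nat list \<times> nat set \<times> real \<times> gam) set"
  for m n \<gamma> where
  TA_root: "([], {0<..<rank \<gamma>}, 1, \<gamma>) \<in> TA m n \<gamma>"
| TA_rootchild: "\<lbrakk> 1 \<le> k; k \<le> length (eva \<gamma>); eva \<gamma> ! (k - 1) = (I, \<epsilon>, \<eta>) \<rbrakk>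
                 \<Longrightarrow> ([k], I, \<epsilon>, \<eta>) \<in> TA m n \<gamma>"
| TA_child: "\<lbrakk> (t, I, \<epsilon>, \<eta>) \<in> TA m n \<gamma>; t \<noteq> []; 1 \<le> k; k \<le> length (eva \<eta>);
              eva \<eta> ! (k - 1) = (I', \<epsilon>', \<eta>'); Pnz m n (I' \<inter> I) \<eta>' \<rbrakk>
             \<Longrightarrow> (t @ [k], I' \<inter> I, \<epsilon>', \<eta>') \<in> TA m n \<gamma>"

definition covers :: "(nat \<Rightarrow> nat) \<Rightarrow> (nat \<Rightarrow> nat) \<Rightarrow> gam \<Rightarrow> (gam \<Rightarrow> real) \<Rightarrow> nat list \<Rightarrow> bool" where
  "covers m n \<gamma> a t \<longleftrightarrow> (\<exists>I \<epsilon> \<eta>. (t, I, \<epsilon>, \<eta>) \<in> TA m n \<gamma> \<and>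
      rng_vec a \<inter> rng_e m n \<gamma> \<subseteq> rng_fun m n \<eta> I)"

definition covering_index :: "(nat \<Rightarrow> nat) \<Rightarrow> (nat \<Rightarrow> nat) \<Rightarrow> gam \<Rightarrow> (gam \<Rightarrow> real) \<Rightarrow> nat list \<Rightarrow> bool" where
  "covering_index m n \<gamma> a v \<longleftrightarrow> covers m n \<gamma> a v \<and> (\<forall>t. covers m n \<gamma> a t \<longrightarrow> \<not> strict_prefix v t)"

end

theory Submission
  imports Defs
begin

lemma m_ge4: assumes "seq_ok m n" "j \<ge> 1" shows "m j \<ge> 4"
  using assms(2)
proof (induction j rule: dec_induct)
  case base thus ?case using assms(1) by (simp add: seq_ok_def)
next
  case (step j)
  have "m (j+1) \<ge> (m j)^2" using assms(1) step.hyps(1) by (simp add: seq_ok_def)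
  moreover have "(m j)^2 \<ge> m j" using step.IH by (simp add: power2_eq_square)
  ultimately show ?case using step.IH by simp
qed

lemma Gamma_rank_pos: "\<eta> \<in> Gamma m n \<Longrightarrow> rank \<eta> \<ge> 1"
  by (induction rule: Gamma.induct) auto

lemma dc_rank: "\<eta> \<in> Gamma m n \<Longrightarrow> dc \<eta> \<delta> \<noteq> 0 \<Longrightarrow> rank \<delta> \<le> rank \<eta>"
  by (induction \<eta> arbitrary: \<delta> rule: Gamma.induct) (auto split: if_splits, (fastforce)+)

lemma wden_ge4: "\<eta> \<in> Gamma m n \<Longrightarrow> seq_ok m n \<Longrightarrow> \<eta> \<noteq> One \<Longrightarrow> wden \<eta> \<ge> 4"
  by (erule Gamma.cases) (auto intro: m_ge4)

lemma eva_ivl: "(I,e,\<eta>) \<in> set (eva \<gamma>) \<Longrightarrow> \<exists>x y. I = {x..y}"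
  by (induction \<gamma> rule: eva.induct) auto

lemma eva_sub: "\<gamma> \<in> Gamma m n \<Longrightarrow> (I,e,\<eta>) \<in> set (eva \<gamma>) \<Longrightarrow>
   I \<subseteq> {1..<rank \<gamma>} \<and> \<eta> \<in> Gamma m n \<and> (e = 1 \<or> e = -1)"
  by (induction \<gamma> rule: Gamma.induct) fastforce+

lemma eva_dc: "\<gamma> \<in> Gamma m n \<Longrightarrow> k < length (eva \<gamma>) \<Longrightarrow> eva \<gamma> ! k = (I0,e0,\<eta>0) \<Longrightarrow>
   rank \<delta> \<in> I0 \<Longrightarrow> dc \<gamma> \<delta> = e0 / real (wden \<gamma>) * dc \<eta>0 \<delta>"
proof (induction \<gamma> arbitrary: k rule: Gamma.induct)
  case Gamma_One thus ?case by simp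
next
  case (Gamma_0 j q \<epsilon> \<eta>)
  thus ?case by auto
next
  case (Gamma_xi p q j \<xi> \<epsilon> \<eta>)
  show ?case
  proof (cases "k < length (eva \<xi>)")
    case True
    hence ek: "eva \<xi> ! k = (I0,e0,\<eta>0)" using Gamma_xi.prems by (simp add: nth_append)
    have IH: "dc \<xi> \<delta> = e0 / real (wden \<xi>) * dc \<eta>0 \<delta>" using Gamma_xi.IH(1) True ek Gamma_xi.prems by blast
    have "(I0,e0,\<eta>0) \<in> set (eva \<xi>)" using ek True by (metis nth_mem)
    hence "I0 \<subseteq> {1..<p}" using eva_sub[OF Gamma_xi.hyps(5)] Gamma_xi.hyps(6) by blast
    hence "rank \<delta> < p" using Gamma_xi.prems by auto
    thus ?thesis using IH Gamma_xi.hyps by auto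
  next
    case False
    hence "k = length (eva \<xi>)" using Gamma_xi.prems by simp
    hence "I0 = {p+1..q} \<and> e0 = \<epsilon> \<and> \<eta>0 = \<eta>" using Gamma_xi.prems Gamma_xi.hyps by simp
    moreover have "dc \<xi> \<delta> = 0" using dc_rank[OF Gamma_xi.hyps(5)] Gamma_xi.hyps(6) calculation Gamma_xi.prems
      by fastforce
    ultimately show ?thesis using Gamma_xi.prems Gamma_xi.hyps by auto
  qed
qed


definition conv :: "nat set \<Rightarrow> bool" where
  "conv I \<longleftrightarrow> (\<forall>x y z. x \<in> I \<longrightarrow> z \<in> I \<longrightarrow> x \<le> y \<longrightarrow> y \<le> z \<longrightarrow> y \<in> I)"

lemma conv_ivl: "conv {x..y}" by (auto simp: conv_def)

lemma conv_Int: "conv A \<Longrightarrow> conv B \<Longrightarrow> conv (A \<inter> B)"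
  unfolding conv_def by (metis IntD1 IntD2 IntI)

lemma TA_inv:
  assumes seq: "seq_ok m n" and g: "\<gamma> \<in> Gamma m n"
  shows "(t,I,e,\<eta>) \<in> TA m n \<gamma> \<Longrightarrow> \<eta> \<in> Gamma m n \<and> conv I \<and> I \<subseteq> {0<..<rank \<gamma>} \<and>
     (\<exists>c. \<bar>c\<bar> \<le> (1/4)^length t \<and> (\<forall>\<delta>. rank \<delta> \<in> I \<longrightarrow> dc \<gamma> \<delta> = c * dc \<eta> \<delta>))"
proof (induction rule: TA.induct)
  case TA_root
  show ?case using g by (auto simp: conv_def intro!: exI[of _ 1])
next
  case (TA_rootchild k I e \<eta>)
  have mem: "(I,e,\<eta>) \<in> set (eva \<gamma>)" using TA_rootchild by (metis One_nat_def Suc_le_eq Suc_pred nth_mem)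
  have es: "I \<subseteq> {1..<rank \<gamma>} \<and> \<eta> \<in> Gamma m n \<and> (e = 1 \<or> e = -1)" using eva_sub[OF g mem] .
  have "\<gamma> \<noteq> One" using TA_rootchild by auto
  hence w: "wden \<gamma> \<ge> 4" using wden_ge4 g seq by blast
  have cv: "conv I" using eva_ivl[OF mem] conv_ivl by blast
  have dc: "\<forall>\<delta>. rank \<delta> \<in> I \<longrightarrow> dc \<gamma> \<delta> = e / real (wden \<gamma>) * dc \<eta> \<delta>"
    using eva_dc[OF g, of "k-1" I e \<eta>] TA_rootchild by auto
  have "\<bar>e / real (wden \<gamma>)\<bar> \<le> 1/4" using es w by (auto simp: divide_simps)
  thus ?case using es cv dc by (auto intro!: exI[of _ "e / real (wden \<gamma>)"])
next
  case (TA_child t I e \<eta> k I' e' \<eta>')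
  from TA_child.IH obtain c where hg: "\<eta> \<in> Gamma m n" and cvI: "conv I" and Isub: "I \<subseteq> {0<..<rank \<gamma>}"
    and cb: "\<bar>c\<bar> \<le> (1/4)^length t" and cdc: "\<forall>\<delta>. rank \<delta> \<in> I \<longrightarrow> dc \<gamma> \<delta> = c * dc \<eta> \<delta>" by blast
  have mem: "(I',e',\<eta>') \<in> set (eva \<eta>)" using TA_child by (metis One_nat_def Suc_le_eq Suc_pred nth_mem)
  have es: "\<eta>' \<in> Gamma m n \<and> (e' = 1 \<or> e' = -1)" using eva_sub[OF hg mem] by blast
  have "\<eta> \<noteq> One" using TA_child by auto
  hence w: "wden \<eta> \<ge> 4" using wden_ge4 hg seq by blast
  have cv: "conv (I' \<inter> I)" using eva_ivl[OF mem] conv_ivl conv_Int cvI by blast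
  have dc: "\<forall>\<delta>. rank \<delta> \<in> I' \<longrightarrow> dc \<eta> \<delta> = e' / real (wden \<eta>) * dc \<eta>' \<delta>"
    using eva_dc[OF hg, of "k-1" I' e' \<eta>'] TA_child by auto
  have x: "\<bar>e' / real (wden \<eta>)\<bar> \<le> 1/4" using es w by (auto simp: divide_simps)
  have "\<bar>c\<bar> * \<bar>e' / real (wden \<eta>)\<bar> \<le> (1/4)^length t * (1/4)"
    by (rule mult_mono[OF cb x]) auto
  hence "\<bar>c * (e' / real (wden \<eta>))\<bar> \<le> (1/4)^length t * (1/4)"
    by (simp add: abs_mult)
  hence "\<bar>c * (e' / real (wden \<eta>))\<bar> \<le> (1/4)^length (t @ [k])" by simp
  moreover have "\<forall>\<delta>. rank \<delta> \<in> I' \<inter> I \<longrightarrow> dc \<gamma> \<delta> = (c * (e' / real (wden \<eta>))) * dc \<eta>' \<delta>"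
    using cdc dc by auto
  ultimately show ?case using es cv Isub by blast
qed

lemma hull_mem: "finite S \<Longrightarrow> x \<in> S \<Longrightarrow> x \<in> ivl_hull S"
  by (auto simp: ivl_hull_def)

lemma hull_sub: "finite S \<Longrightarrow> S \<subseteq> I \<Longrightarrow> conv I \<Longrightarrow> ivl_hull S \<subseteq> I"
proof -
  assume f: "finite S" and s: "S \<subseteq> I" and c: "conv I"
  show ?thesis
  proof (cases "S = {}")
    case True thus ?thesis by (simp add: ivl_hull_def)
  next
    case False
    have "Min S \<in> I" "Max S \<in> I" using Min_in Max_in f False s by blast+
    show ?thesis
    proof
      fix y assume "y \<in> ivl_hull S"
      hence "Min S \<le> y" "y \<le> Max S" using False by (auto simp: ivl_hull_def)
      thus "y \<in> I" using c \<open>Min S \<in> I\<close> \<open>Max S \<in> I\<close> unfolding conv_def by blast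
    qed
  qed
qed


definition FF :: "(gam \<Rightarrow> real) \<Rightarrow> gam \<Rightarrow> nat \<Rightarrow> real" where
  "FF a \<eta> q = (\<Sum>\<delta>\<in>{\<delta>. a \<delta> \<noteq> 0 \<and> rank \<delta> \<le> q}. a \<delta> * dc \<eta> \<delta>)"

lemma split_rank:
  assumes "finite {\<delta>. a \<delta> \<noteq> 0}" "p \<le> q"
  shows "(\<Sum>\<delta>\<in>{\<delta>. a \<delta> \<noteq> 0 \<and> rank \<delta> \<le> q}. if p < rank \<delta> then g \<delta> else 0)
     = (\<Sum>\<delta>\<in>{\<delta>. a \<delta> \<noteq> 0 \<and> rank \<delta> \<le> q}. g \<delta>) - (\<Sum>\<delta>\<in>{\<delta>. a \<delta> \<noteq> 0 \<and> rank \<delta> \<le> p}. (g \<delta>::real))"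
proof -
  let ?A = "{\<delta>. a \<delta> \<noteq> 0 \<and> rank \<delta> \<le> q}"
  let ?B = "{\<delta>. a \<delta> \<noteq> 0 \<and> rank \<delta> \<le> p}"
  have fin: "finite ?A" by (rule finite_subset[OF _ assms(1)]) auto
  have sub: "?B \<subseteq> ?A" using assms(2) by auto
  have "(\<Sum>\<delta>\<in>?A. g \<delta>) = (\<Sum>\<delta>\<in>?A - ?B. g \<delta>) + (\<Sum>\<delta>\<in>?B. g \<delta>)"
    by (rule sum.subset_diff[OF sub fin])
  moreover have "(\<Sum>\<delta>\<in>?A. if p < rank \<delta> then g \<delta> else 0) = (\<Sum>\<delta>\<in>{\<delta>\<in>?A. p < rank \<delta>}. g \<delta>)"
    by (rule sum.inter_filter[symmetric, OF fin])
  moreover have "{\<delta>\<in>?A. p < rank \<delta>} = ?A - ?B" by auto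
  ultimately show ?thesis by simp
qed

lemma FF_full:
  assumes "\<eta> \<in> Gamma m n" "rank \<eta> \<le> q" "finite {\<delta>. a \<delta> \<noteq> 0}"
  shows "FF a \<eta> q = yvec a \<eta>"
  unfolding FF_def yvec_def
proof (rule sum.mono_neutral_left[OF assms(3)])
  show "{\<delta>. a \<delta> \<noteq> 0 \<and> rank \<delta> \<le> q} \<subseteq> {\<delta>. a \<delta> \<noteq> 0}" by auto
  show "\<forall>i\<in>{\<delta>. a \<delta> \<noteq> 0} - {\<delta>. a \<delta> \<noteq> 0 \<and> rank \<delta> \<le> q}. a i * dc \<eta> i = 0"
    using dc_rank[OF assms(1)] assms(2) by fastforce
qed

lemma FF_bound:
  assumes seq: "seq_ok m n" and fin: "finite {\<delta>. a \<delta> \<noteq> 0}"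
    and sub: "{\<delta>. a \<delta> \<noteq> 0} \<subseteq> Gamma m n"
    and bnd: "\<forall>\<eta>\<in>Gamma m n. \<bar>yvec a \<eta>\<bar> \<le> 1"
  shows "\<eta> \<in> Gamma m n \<Longrightarrow> \<bar>FF a \<eta> q\<bar> \<le> 2"
proof (induction \<eta> arbitrary: q rule: Gamma.induct)
  case Gamma_One
  show ?case
  proof (cases "1 \<le> q")
    case True
    hence "FF a One q = yvec a One" using FF_full[OF Gamma.Gamma_One _ fin] by simp
    thus ?thesis using bnd Gamma.Gamma_One by fastforce
  next
    case False
    have e: "{\<delta>. a \<delta> \<noteq> 0 \<and> rank \<delta> \<le> q} = {}" using False sub Gamma_rank_pos by fastforce
    show ?thesis unfolding FF_def e by simp
  qed
next
  case (Gamma_0 j q0 \<epsilon> \<eta>)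
  let ?g = "G (q0 + 1) None (m j) \<epsilon> \<eta>"
  have gG: "?g \<in> Gamma m n" using Gamma_0.hyps by (intro Gamma.Gamma_0) auto
  show ?case
  proof (cases "q0 + 1 \<le> q")
    case True
    hence "FF a ?g q = yvec a ?g" using FF_full[OF gG _ fin] by simp
    thus ?thesis using bnd gG by fastforce
  next
    case False
    have "FF a ?g q = (\<Sum>\<delta>\<in>{\<delta>. a \<delta> \<noteq> 0 \<and> rank \<delta> \<le> q}. \<epsilon> / real (m j) * (a \<delta> * dc \<eta> \<delta>))"
      unfolding FF_def
    proof (rule sum.cong)
      fix \<delta> assume d: "\<delta> \<in> {\<delta>. a \<delta> \<noteq> 0 \<and> rank \<delta> \<le> q}"
      hence "rank \<delta> \<ge> 1" using sub Gamma_rank_pos by blast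
      moreover have "\<delta> \<noteq> ?g" using d False by auto
      ultimately show "a \<delta> * dc ?g \<delta> = \<epsilon> / real (m j) * (a \<delta> * dc \<eta> \<delta>)" using d False by auto
    qed simp
    also have "\<dots> = \<epsilon> / real (m j) * FF a \<eta> q" by (simp add: FF_def sum_distrib_left)
    finally have eq: "FF a ?g q = \<epsilon> / real (m j) * FF a \<eta> q" .
    have m4: "real (m j) \<ge> 4" using m_ge4[OF seq Gamma_0.hyps(1)] by simp
    have "\<bar>\<epsilon>\<bar> = 1" using Gamma_0.hyps by auto
    hence "\<bar>FF a ?g q\<bar> = \<bar>FF a \<eta> q\<bar> / real (m j)" using eq m4 by (simp add: abs_mult)
    also have "\<dots> \<le> 2 / 4" using Gamma_0.IH[of q] m4
      by (meson frac_le le_numeral_extra(1) order.trans zero_le_numeral abs_ge_zero dual_order.refl zero_less_numeral)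
    finally show ?thesis by simp
  qed
next
  case (Gamma_xi p q0 j \<xi> \<epsilon> \<eta>)
  let ?g = "G (q0 + 1) (Some \<xi>) (m j) \<epsilon> \<eta>"
  have gG: "?g \<in> Gamma m n" using Gamma_xi.hyps by (intro Gamma.Gamma_xi) auto
  show ?case
  proof (cases "q0 + 1 \<le> q")
    case True
    hence "FF a ?g q = yvec a ?g" using FF_full[OF gG _ fin] by simp
    thus ?thesis using bnd gG by fastforce
  next
    case False
    let ?S = "(\<Sum>\<delta>\<in>{\<delta>. a \<delta> \<noteq> 0 \<and> rank \<delta> \<le> q}. if p < rank \<delta> then a \<delta> * dc \<eta> \<delta> else 0)"
    have "FF a ?g q = (\<Sum>\<delta>\<in>{\<delta>. a \<delta> \<noteq> 0 \<and> rank \<delta> \<le> q}.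
            a \<delta> * dc \<xi> \<delta> + \<epsilon> / real (m j) * (if p < rank \<delta> then a \<delta> * dc \<eta> \<delta> else 0))"
      unfolding FF_def
    proof (rule sum.cong)
      fix \<delta> assume d: "\<delta> \<in> {\<delta>. a \<delta> \<noteq> 0 \<and> rank \<delta> \<le> q}"
      have "\<delta> \<noteq> ?g" using d False by auto
      thus "a \<delta> * dc ?g \<delta> = a \<delta> * dc \<xi> \<delta> + \<epsilon> / real (m j) * (if p < rank \<delta> then a \<delta> * dc \<eta> \<delta> else 0)"
        using d False Gamma_xi.hyps by (auto simp: algebra_simps)
    qed simp
    also have "\<dots> = FF a \<xi> q + \<epsilon> / real (m j) * ?S"
      by (simp add: FF_def sum.distrib sum_distrib_left)
    finally have eq: "FF a ?g q = FF a \<xi> q + \<epsilon> / real (m j) * ?S" .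
    have m4: "real (m j) \<ge> 4" using m_ge4[OF seq Gamma_xi.hyps(3)] by simp
    have e1: "\<bar>\<epsilon>\<bar> = 1" using Gamma_xi.hyps by auto
    show ?thesis
    proof (cases "q \<le> p")
      case True
      hence "?S = 0" by (intro sum.neutral) auto
      thus ?thesis using eq Gamma_xi.IH(1)[of q] by simp
    next
      case False
      have y: "FF a \<xi> q = yvec a \<xi>" using FF_full[OF Gamma_xi.hyps(5) _ fin] False Gamma_xi.hyps(6) by simp
      have y1: "\<bar>FF a \<xi> q\<bar> \<le> 1" using y bnd Gamma_xi.hyps(5) by simp
      have "?S = FF a \<eta> q - FF a \<eta> p" unfolding FF_def using split_rank[OF fin, of p q] False by simp
      hence "\<bar>?S\<bar> \<le> 4" using Gamma_xi.IH(2)[of q] Gamma_xi.IH(2)[of p] by linarith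
      hence "\<bar>?S\<bar> / real (m j) \<le> 4 / 4" using m4
        by (meson frac_le le_numeral_extra(1) order.trans zero_le_numeral abs_ge_zero dual_order.refl zero_less_numeral)
      moreover have "\<bar>\<epsilon> / real (m j) * ?S\<bar> = \<bar>?S\<bar> / real (m j)" using e1 m4 by (simp add: abs_mult)
      ultimately show ?thesis using eq y1 by linarith
    qed
  qed
qed


lemma part1:
  assumes seq: "seq_ok m n" and g: "\<gamma> \<in> Gamma m n" and fs: "finsupp_BmT m n a"
    and nm: "normalised m n a" and ci: "covering_index m n \<gamma> a v"
  shows "\<bar>yvec a \<gamma>\<bar> \<le> (1/4)^length v * 4"
proof -
  have fin: "finite {\<delta>. a \<delta> \<noteq> 0}" and sub: "{\<delta>. a \<delta> \<noteq> 0} \<subseteq> Gamma m n"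
    using fs by (auto simp: finsupp_BmT_def)
  have bnd: "\<forall>\<eta>\<in>Gamma m n. \<bar>yvec a \<eta>\<bar> \<le> 1"
  proof
    fix \<eta> assume "\<eta> \<in> Gamma m n"
    hence "\<bar>yvec a \<eta>\<bar> \<le> (SUP \<eta>\<in>Gamma m n. \<bar>yvec a \<eta>\<bar>)"
      using nm by (intro cSUP_upper) (auto simp: normalised_def)
    thus "\<bar>yvec a \<eta>\<bar> \<le> 1" using nm by (simp add: normalised_def)
  qed
  obtain I e \<eta> where ta: "(v, I, e, \<eta>) \<in> TA m n \<gamma>"
    and cov: "rng_vec a \<inter> rng_e m n \<gamma> \<subseteq> rng_fun m n \<eta> I"
    using ci by (auto simp: covering_index_def covers_def)
  from TA_inv[OF seq g ta] obtain c where hg: "\<eta> \<in> Gamma m n" and cvI: "conv I"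
    and Isub: "I \<subseteq> {0<..<rank \<gamma>}" and cb: "\<bar>c\<bar> \<le> (1/4)^length v"
    and cdc: "\<forall>\<delta>. rank \<delta> \<in> I \<longrightarrow> dc \<gamma> \<delta> = c * dc \<eta> \<delta>" by blast
  have finI: "finite I" using Isub finite_subset by blast
  have K: "rank \<delta> \<in> I" if d1: "a \<delta> \<noteq> 0" and d2: "dc \<gamma> \<delta> \<noteq> 0" for \<delta>
  proof -
    have dG: "\<delta> \<in> Gamma m n" using sub d1 by blast
    have r1: "rank \<delta> \<in> rng_vec a" unfolding rng_vec_def
      by (rule hull_mem) (use fin d1 in auto)
    have f2: "finite (rank ` {\<delta> \<in> Gamma m n. dc \<gamma> \<delta> \<noteq> 0})"
      by (rule finite_subset[of _ "{..rank \<gamma>}"]) (use dc_rank[OF g] in auto)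
    have r2: "rank \<delta> \<in> rng_e m n \<gamma>" unfolding rng_e_def
      by (rule hull_mem[OF f2]) (use dG d2 in auto)
    have "rng_fun m n \<eta> I \<subseteq> I" unfolding rng_fun_def
      by (rule hull_sub[OF _ _ cvI]) (auto intro: finite_subset[OF _ finI])
    thus ?thesis using r1 r2 cov by blast
  qed
  define E where "E = (\<Sum>\<delta>\<in>{\<delta>. a \<delta> \<noteq> 0}. if rank \<delta> \<in> I then a \<delta> * dc \<eta> \<delta> else 0)"
  have Y: "yvec a \<gamma> = c * E" unfolding yvec_def E_def sum_distrib_left
  proof (rule sum.cong)
    fix \<delta> assume d: "\<delta> \<in> {\<delta>. a \<delta> \<noteq> 0}"
    show "a \<delta> * dc \<gamma> \<delta> = c * (if rank \<delta> \<in> I then a \<delta> * dc \<eta> \<delta> else 0)"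
    proof (cases "rank \<delta> \<in> I")
      case True thus ?thesis using cdc by simp
    next
      case False thus ?thesis using K d by fastforce
    qed
  qed simp
  have Eb: "\<bar>E\<bar> \<le> 4"
  proof (cases "I = {}")
    case True thus ?thesis by (simp add: E_def)
  next
    case False
    define lo where "lo = Min I"
    define hi where "hi = Max I"
    have lo1: "lo \<ge> 1" using Min_in[OF finI False] Isub lo_def by auto
    have loI: "lo \<in> I" and hiI: "hi \<in> I" using Min_in[OF finI False] Max_in[OF finI False] lo_def hi_def by auto
    have Iiff: "x \<in> I \<longleftrightarrow> lo - 1 < x \<and> x \<le> hi" for x
    proof
      assume "x \<in> I" thus "lo - 1 < x \<and> x \<le> hi" using finI lo_def hi_def lo1
        by (metis Min_le Max_ge diff_less le_less_trans less_one not_le zero_less_one)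
    next
      assume "lo - 1 < x \<and> x \<le> hi"
      hence "lo \<le> x" "x \<le> hi" using lo1 by auto
      thus "x \<in> I" using cvI loI hiI unfolding conv_def by blast
    qed
    have "E = (\<Sum>\<delta>\<in>{\<delta>\<in>{\<delta>. a \<delta> \<noteq> 0}. rank \<delta> \<in> I}. a \<delta> * dc \<eta> \<delta>)"
      unfolding E_def by (rule sum.inter_filter[symmetric, OF fin])
    also have "{\<delta>\<in>{\<delta>. a \<delta> \<noteq> 0}. rank \<delta> \<in> I} = {\<delta>\<in>{\<delta>. a \<delta> \<noteq> 0 \<and> rank \<delta> \<le> hi}. lo - 1 < rank \<delta>}"
      using Iiff by auto
    also have "(\<Sum>\<delta>\<in>{\<delta>\<in>{\<delta>. a \<delta> \<noteq> 0 \<and> rank \<delta> \<le> hi}. lo - 1 < rank \<delta>}. a \<delta> * dc \<eta> \<delta>)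
        = (\<Sum>\<delta>\<in>{\<delta>. a \<delta> \<noteq> 0 \<and> rank \<delta> \<le> hi}. if lo - 1 < rank \<delta> then a \<delta> * dc \<eta> \<delta> else 0)"
      by (rule sum.inter_filter) (rule finite_subset[OF _ fin], auto)
    also have "\<dots> = FF a \<eta> hi - FF a \<eta> (lo - 1)"
      unfolding FF_def by (rule split_rank[OF fin]) (use Iiff hiI in auto)
    finally have "E = FF a \<eta> hi - FF a \<eta> (lo - 1)" .
    thus ?thesis using FF_bound[OF seq fin sub bnd hg, of hi] FF_bound[OF seq fin sub bnd hg, of "lo - 1"]
      by linarith
  qed
  have "\<bar>yvec a \<gamma>\<bar> = \<bar>c\<bar> * \<bar>E\<bar>" using Y by (simp add: abs_mult)
  also have "\<dots> \<le> (1/4)^length v * 4" by (rule mult_mono[OF cb Eb]) auto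
  finally show ?thesis .
qed

lemma tree_prefix: "is_tree T \<Longrightarrow> u @ w \<in> T \<Longrightarrow> u \<in> T"
proof (induction w rule: rev_induct)
  case Nil thus ?case by simp
next
  case (snoc x xs)
  hence "(u @ xs) @ [x] \<in> T" by simp
  hence "u @ xs \<in> T" using snoc.prems(1) unfolding is_tree_def by blast
  thus ?case using snoc by blast
qed

lemma part2:
  assumes seq: "seq_ok m n" and W: "W_tree_analysis m n T ft f" and vT: "v \<in> T" and fv: "ft v = estar l"
  shows "f l \<le> (1/4)^length v"
proof -
  have tr: "is_tree T" and root: "ft [] = f" using W by (auto simp: W_tree_analysis_def)
  have fT: "finite T" using tr by (simp add: is_tree_def)
  have main: "\<forall>t. t @ s = v \<longrightarrow> 0 < ft t l \<and> ft t l \<le> (1/4)^length s" for s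
  proof (induction s)
    case Nil thus ?case using fv by (simp add: estar_def)
  next
    case (Cons k s)
    show ?case
    proof (intro allI impI)
      fix t assume tv: "t @ k # s = v"
      have tk: "(t @ [k]) @ s = v" using tv by simp
      have IH: "0 < ft (t @ [k]) l" "ft (t @ [k]) l \<le> (1/4)^length s" using Cons.IH tk by blast+
      have tkT: "t @ [k] \<in> T" using tree_prefix[OF tr] tk vT by blast
      have tT: "t \<in> T" using tree_prefix[OF tr tkT] .
      have sk: "t @ [k] \<in> succs T t" using tkT by (auto simp: succs_def)
      hence ne: "succs T t \<noteq> {}" by blast
      obtain j where j1: "j \<ge> 1"
        and bl: "\<forall>s\<in>succs T t. \<forall>s'\<in>succs T t. s \<noteq> s' \<longrightarrow> block_less (ft s) (ft s') \<or> block_less (ft s') (ft s)"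
        and eq: "ft t = (\<lambda>x. (1 / real (m j)) * (\<Sum>s\<in>succs T t. ft s x))"
        using W tT ne unfolding W_tree_analysis_def by blast
      have fs: "finite (succs T t)" using fT by (rule finite_subset[rotated]) (auto simp: succs_def)
      have z: "ft s' l = 0" if "s' \<in> succs T t - {t @ [k]}" for s'
      proof (rule ccontr)
        assume nz: "ft s' l \<noteq> 0"
        have "l \<in> supp (ft s')" "l \<in> supp (ft (t @ [k]))" using nz IH(1) by (auto simp: supp_def)
        moreover have "block_less (ft s') (ft (t @ [k])) \<or> block_less (ft (t @ [k])) (ft s')"
          using bl that sk by blast
        ultimately show False by (auto simp: block_less_def)
      qed
      have "(\<Sum>s\<in>succs T t. ft s l) = ft (t @ [k]) l + (\<Sum>s\<in>succs T t - {t @ [k]}. ft s l)"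
        using sum.remove[OF fs sk] by simp
      also have "(\<Sum>s\<in>succs T t - {t @ [k]}. ft s l) = 0" using z by simp
      finally have "ft t l = ft (t @ [k]) l / real (m j)" using eq by simp
      moreover have m4: "real (m j) \<ge> 4" using m_ge4[OF seq j1] by simp
      ultimately have "0 < ft t l" using IH by simp
      have "ft t l \<le> ft (t @ [k]) l / 4"
        unfolding \<open>ft t l = ft (t @ [k]) l / real (m j)\<close>
        by (rule frac_le) (use IH m4 in auto)
      also have "\<dots> \<le> (1/4)^length s / 4" using IH(2) by simp
      finally have "ft t l \<le> (1/4)^length s / 4" .
      thus "0 < ft t l \<and> ft t l \<le> (1/4)^length (k # s)" using \<open>0 < ft t l\<close> by simp
    qed
  qed
  show ?thesis using main[of v] root by auto
qed

theorem lemma3p2: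
  fixes m n :: "nat \<Rightarrow> nat"
  assumes "seq_ok m n"
  shows "(\<forall>(i::nat) \<gamma> a v.
            i \<ge> 1 \<and> \<gamma> \<in> Gamma m n \<and> finsupp_BmT m n a \<and> normalised m n a \<and>
            v \<noteq> [] \<and> covering_index m n \<gamma> a v \<and>
            (\<forall>\<xi>\<in>Gamma m n. \<bar>a \<xi>\<bar> < (1/4) ^ (i + 3)) \<and>
            \<bar>yvec a \<gamma>\<bar> > (1/4) ^ (i + 1)
            \<longrightarrow> length v \<le> i + 1)
       \<and> (\<forall>(i::nat) f T ft v l.
            i \<ge> 1 \<and> f \<in> W m n \<and> W_tree_analysis m n T ft f \<and> v \<in> T \<and> v \<noteq> [] \<and>
            ft v = estar l \<and> f l > (1/4) ^ (i + 1)
            \<longrightarrow> length v \<le> i)"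
proof (intro conjI allI impI)
  fix i :: nat and \<gamma> a v
  assume h: "i \<ge> 1 \<and> \<gamma> \<in> Gamma m n \<and> finsupp_BmT m n a \<and> normalised m n a \<and>
            v \<noteq> [] \<and> covering_index m n \<gamma> a v \<and>
            (\<forall>\<xi>\<in>Gamma m n. \<bar>a \<xi>\<bar> < (1/4) ^ (i + 3)) \<and>
            \<bar>yvec a \<gamma>\<bar> > (1/4) ^ (i + 1)"
  hence b: "(1/4::real) ^ (i + 1) < (1/4)^length v * 4" using part1[OF assms] by fastforce
  show "length v \<le> i + 1"
  proof (rule ccontr)
    assume "\<not> length v \<le> i + 1"
    then obtain r where r: "length v = Suc r" "i + 1 \<le> r" by (metis Suc_le_D not_le Suc_le_eq)
    have "(1/4::real)^length v * 4 = (1/4)^r" using r(1) by simp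
    also have "\<dots> \<le> (1/4)^(i+1)" by (rule power_decreasing[OF r(2)]) auto
    finally show False using b by simp
  qed
next
  fix i :: nat and f T ft v l
  assume h: "i \<ge> 1 \<and> f \<in> W m n \<and> W_tree_analysis m n T ft f \<and> v \<in> T \<and> v \<noteq> [] \<and>
            ft v = estar l \<and> f l > (1/4) ^ (i + 1)"
  hence b: "(1/4::real) ^ (i + 1) < (1/4)^length v" using part2[OF assms] by fastforce
  show "length v \<le> i"
  proof (rule ccontr)
    assume "\<not> length v \<le> i"
    hence "(1/4::real)^length v \<le> (1/4)^(i+1)" by (intro power_decreasing) auto
    thus False using b by simp
  qed
qed

end
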